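(* Let $(\Omega,\mathcal{A})$ be a measurable space with a $\sigma$-finite measure $\mu$, $\pi$ a probability density with respect to $\mu$, and $q_1,\dots,q_D$ transition densities (for each $x$, $q_d(x,\cdot)$ is a probability density with respect to $\mu$). Write $\bar\pi=\pi\otimes\pi$ and $(X,X')\sim\bar\pi$. Assume (A1): for every $d$, $\bar\pi\{(x,x'):q_d(x,x')=0\}=0$; (A2): for every $d$, $\mathbb{E}_{\bar\pi}[|\log q_d(X,X')|]<\infty$. Let $\mathcal{S}$, $\mathcal{E}_{\bar\pi}$, $F$, $\alpha^{\max}$ be as in the context, and let $(\alpha^t)_{t\ge1}$ be defined by $\alpha^1=(1/D,\dots,1/D)$ and $\alpha^{t+1}=F(\alpha^t)$. Then for every $\alpha\in\mathcal{S}$ with $\alpha\ne\alpha^{\max}$ there is a neighborhood $V_\alpha$ of $\alpha$ in $\mathcal{S}$ such that if $\alpha^{t_0}\in V_\alpha$ for some $t_0$, then there exists $t>t_0$ with $\alpha^t\notin V_\alpha$.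
   Context: $\mathcal{S}=\{\alpha\in\mathbb{R}^D:\alpha_d\ge0,\ \sum_d\alpha_d=1\}$; $\mathcal{E}_{\bar\pi}(\alpha)=\mathbb{E}_{\bar\pi}[\log\sum_{d=1}^D\alpha_dq_d(X,X')]$; $F(\alpha)=\big(\mathbb{E}_{\bar\pi}[\alpha_dq_d(X,X')/\sum_{j=1}^D\alpha_jq_j(X,X')]\big)_{1\le d\le D}$. Standing assumption of the paper's setting: $\mathcal{E}_{\bar\pi}$ is strictly concave on $\mathcal{S}$; $\alpha^{\max}$ denotes its unique global maximizer on $\mathcal{S}$. *)

theory Defs
  imports "HOL-Probability.Probability"
begin

text \<open>Index set {1..D} is rendered as a finite type 'd (D = CARD('d)); vectors alpha :: real^'d.\<close>

definition prob_simplex :: "(real^'d::finite) set" where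
  "prob_simplex = {\<alpha>. (\<forall>d. \<alpha>$d \<ge> 0) \<and> (\<Sum>d\<in>UNIV. \<alpha>$d) = 1}"

definition pibar :: "'a measure \<Rightarrow> ('a \<Rightarrow> real) \<Rightarrow> ('a \<times> 'a) measure" where
  "pibar M \<pi> = density (M \<Otimes>\<^sub>M M) (\<lambda>z. ennreal (\<pi> (fst z) * \<pi> (snd z)))"

definition Eobj :: "'a measure \<Rightarrow> ('a \<Rightarrow> real) \<Rightarrow> ('d::finite \<Rightarrow> 'a \<Rightarrow> 'a \<Rightarrow> real)
    \<Rightarrow> real^'d \<Rightarrow> real" where
  "Eobj M \<pi> q \<alpha> = (\<integral>z. ln (\<Sum>d\<in>UNIV. \<alpha>$d * q d (fst z) (snd z)) \<partial>pibar M \<pi>)"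

definition Fmap :: "'a measure \<Rightarrow> ('a \<Rightarrow> real) \<Rightarrow> ('d::finite \<Rightarrow> 'a \<Rightarrow> 'a \<Rightarrow> real)
    \<Rightarrow> real^'d \<Rightarrow> real^'d" where
  "Fmap M \<pi> q \<alpha> = (\<chi> d. \<integral>z. \<alpha>$d * q d (fst z) (snd z)
        / (\<Sum>j\<in>UNIV. \<alpha>$j * q j (fst z) (snd z)) \<partial>pibar M \<pi>)"

definition strictly_concave_on :: "'v::real_vector set \<Rightarrow> ('v \<Rightarrow> real) \<Rightarrow> bool" where
  "strictly_concave_on S f \<longleftrightarrow> (\<forall>x\<in>S. \<forall>y\<in>S. \<forall>u::real. x \<noteq> y \<and> 0 < u \<and> u < 1 \<longrightarrow>
      f (u *\<^sub>R x + (1 - u) *\<^sub>R y) > u * f x + (1 - u) * f y)"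

definition alpha_seq :: "(real^'d::finite \<Rightarrow> real^'d) \<Rightarrow> nat \<Rightarrow> real^'d" where
  "alpha_seq F t = (F ^^ (t - 1)) (\<chi> d. 1 / real CARD('d))"

end

theory Submission
  imports Defs
begin

locale psetup =
  fixes M :: "'a measure" and \<pi> :: "'a \<Rightarrow> real"
    and q :: "'d::finite \<Rightarrow> 'a \<Rightarrow> 'a \<Rightarrow> real"
  assumes sf: "sigma_finite_measure M"
    and pi_meas: "\<pi> \<in> borel_measurable M"
    and pi_nonneg: "\<And>x. x \<in> space M \<Longrightarrow> \<pi> x \<ge> 0"
    and pi_int: "(\<integral>\<^sup>+ x. ennreal (\<pi> x) \<partial>M) = 1"
    and q_meas: "\<And>d. (\<lambda>z. q d (fst z) (snd z)) \<in> borel_measurable (M \<Otimes>\<^sub>M M)"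
    and q_nonneg: "\<And>d x y. x \<in> space M \<Longrightarrow> y \<in> space M \<Longrightarrow> q d x y \<ge> 0"
    and A1: "\<And>d. emeasure (pibar M \<pi>) {z \<in> space (M \<Otimes>\<^sub>M M). q d (fst z) (snd z) = 0} = 0"
    and A2: "\<And>d. (\<integral>\<^sup>+ z. ennreal \<bar>ln (q d (fst z) (snd z))\<bar> \<partial>pibar M \<pi>) < \<infinity>"
begin

declare pi_meas[measurable]

abbreviation "P \<equiv> pibar M \<pi>"
definition "Q d z = q d (fst z) (snd z)"
definition "S (\<beta>::real^'d) z = (\<Sum>j\<in>UNIV. \<beta>$j * Q j z)"

lemma sets_P[measurable_cong]: "sets P = sets (M \<Otimes>\<^sub>M M)"
  by (simp add: pibar_def)
lemma space_P: "space P = space M \<times> space M"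
  by (simp add: pibar_def space_pair_measure)

lemma Q_meas[measurable]: "Q d \<in> borel_measurable P"
  unfolding Q_def using q_meas by (simp add: measurable_cong_sets[OF sets_P refl])

lemma S_meas[measurable]: "S \<beta> \<in> borel_measurable P"
  unfolding S_def by measurable

lemma prob: "prob_space P"
proof
  interpret sigma_finite_measure M by (rule sf)
  have "emeasure P (space P) = (\<integral>\<^sup>+ z. ennreal (\<pi> (fst z) * \<pi> (snd z)) \<partial>(M \<Otimes>\<^sub>M M))"
    unfolding pibar_def
    by (subst emeasure_density) (auto intro!: nn_integral_cong simp: space_pair_measure indicator_def)
  also have "\<dots> = (\<integral>\<^sup>+ x. \<integral>\<^sup>+ y. ennreal (\<pi> x) * ennreal (\<pi> y) \<partial>M \<partial>M)"
    by (subst nn_integral_fst[symmetric]) (auto simp: ennreal_mult pi_nonneg intro!: nn_integral_cong)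
  also have "\<dots> = (\<integral>\<^sup>+ x. ennreal (\<pi> x) * 1 \<partial>M)"
    by (subst nn_integral_cmult) (auto simp: pi_int)
  also have "\<dots> = 1" by (simp add: pi_int)
  finally show "emeasure P (space P) = 1" .
qed

lemma Q_nonneg: "z \<in> space P \<Longrightarrow> Q j z \<ge> 0"
  unfolding Q_def space_P by (cases z) (auto intro: q_nonneg)

definition "Good z \<longleftrightarrow> (\<forall>j. Q j z > 0)"

lemma AE_Good: "AE z in P. Good z"
proof -
  have "AE z in P. \<forall>j\<in>UNIV. Q j z > 0"
  proof (rule AE_finite_allI, simp)
    fix j
    have m: "{z\<in>space P. Q j z = 0} \<in> sets P" by measurable
    have e: "{z \<in> space (M \<Otimes>\<^sub>M M). q j (fst z) (snd z) = 0} = {z\<in>space P. Q j z = 0}"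
      by (auto simp: Q_def space_P space_pair_measure)
    have "AE z in P. Q j z \<noteq> 0"
      by (rule AE_iff_measurable[THEN iffD2, OF m _ A1[of j, unfolded e]]) auto
    then show "AE z in P. Q j z > 0"
      by (rule AE_mp) (auto intro!: AE_I2 dest: Q_nonneg[of _ j])
  qed
  then show ?thesis by (simp add: Good_def)
qed

lemma S_bounds:
  assumes "\<beta> \<in> prob_simplex" "Good z"
  shows "\<exists>k. Q k z \<le> S \<beta> z" "\<exists>k. S \<beta> z \<le> Q k z"
proof -
  let ?R = "range (\<lambda>j. Q j z)"
  have b: "\<And>j. \<beta>$j \<ge> 0" "(\<Sum>j\<in>UNIV. \<beta>$j) = 1" using assms(1) by (auto simp: prob_simplex_def)
  have i1: "Min ?R \<in> ?R" by (rule Min_in) auto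
  have i2: "Max ?R \<in> ?R" by (rule Max_in) auto
  obtain k1 where k1: "Min ?R = Q k1 z" using i1 by blast
  obtain k2 where k2: "Max ?R = Q k2 z" using i2 by blast
  note k = k1 k2
  have mn: "Min ?R \<le> Q j z" and mx: "Q j z \<le> Max ?R" for j
    by (intro Min_le Max_ge; simp)+
  have "(\<Sum>j\<in>UNIV. \<beta>$j * Min ?R) \<le> S \<beta> z"
    unfolding S_def by (intro sum_mono mult_left_mono[OF mn b(1)])
  then have "Min ?R \<le> S \<beta> z" by (simp only: sum_distrib_right[symmetric] b mult_1)
  then show "\<exists>k. Q k z \<le> S \<beta> z" using k by auto
  have "S \<beta> z \<le> (\<Sum>j\<in>UNIV. \<beta>$j * Max ?R)"
    unfolding S_def by (intro sum_mono mult_left_mono[OF mx b(1)])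
  then have "S \<beta> z \<le> Max ?R" by (simp only: sum_distrib_right[symmetric] b mult_1)
  then show "\<exists>k. S \<beta> z \<le> Q k z" using k by auto
qed

lemma S_pos: "\<beta> \<in> prob_simplex \<Longrightarrow> Good z \<Longrightarrow> S \<beta> z > 0"
  using S_bounds(1)[of \<beta> z] by (auto simp: Good_def intro: less_le_trans)

lemma lnQ_int: "integrable P (\<lambda>z. ln (Q j z))"
proof (rule integrableI_bounded)
  show "(\<lambda>z. ln (Q j z)) \<in> borel_measurable P" by measurable
  show "(\<integral>\<^sup>+ z. ennreal (norm (ln (Q j z))) \<partial>P) < \<infinity>" using A2[of j] by (simp add: Q_def)
qed

lemma lnS_int:
  assumes "\<beta> \<in> prob_simplex"
  shows "integrable P (\<lambda>z. ln (S \<beta> z))"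
proof (rule Bochner_Integration.integrable_bound[where f="\<lambda>z. \<Sum>j\<in>UNIV. \<bar>ln (Q j z)\<bar>"])
  show "integrable P (\<lambda>z. \<Sum>j\<in>UNIV. \<bar>ln (Q j z)\<bar>)"
    using lnQ_int by auto
  show "AE z in P. norm (ln (S \<beta> z)) \<le> norm (\<Sum>j\<in>UNIV. \<bar>ln (Q j z)\<bar>)"
    using AE_Good
  proof (rule AE_mp, intro AE_I2 impI)
    fix z assume g: "Good z"
    obtain k1 k2 where k: "Q k1 z \<le> S \<beta> z" "S \<beta> z \<le> Q k2 z"
      using S_bounds[OF assms g] by auto
    have pos: "Q k1 z > 0" "Q k2 z > 0" using g by (auto simp: Good_def)
    have l1: "ln (Q k1 z) \<le> ln (S \<beta> z)" and l2: "ln (S \<beta> z) \<le> ln (Q k2 z)"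
      using k pos by auto
    have sm: "\<And>k. \<bar>ln (Q k z)\<bar> \<le> (\<Sum>j\<in>UNIV. \<bar>ln (Q j z)\<bar>)"
      by (rule member_le_sum) auto
    have "\<bar>ln (S \<beta> z)\<bar> \<le> max \<bar>ln (Q k1 z)\<bar> \<bar>ln (Q k2 z)\<bar>"
      using l1 l2 by linarith
    also have "\<dots> \<le> (\<Sum>j\<in>UNIV. \<bar>ln (Q j z)\<bar>)"
      using sm[of k1] sm[of k2] by simp
    finally show "norm (ln (S \<beta> z)) \<le> norm (\<Sum>j\<in>UNIV. \<bar>ln (Q j z)\<bar>)"
      by (simp add: sum_nonneg)
  qed
  show "(\<lambda>z. ln (S \<beta> z)) \<in> borel_measurable P" by measurable
qed

lemma Eobj_eq: "Eobj M \<pi> q \<beta> = (\<integral>z. ln (S \<beta> z) \<partial>P)"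
  by (simp add: Eobj_def S_def Q_def)

lemma ratio_meas[measurable]: "(\<lambda>z. Q d z / S \<beta> z) \<in> borel_measurable P"
  by measurable

lemma ratio_nonneg: "\<beta> \<in> prob_simplex \<Longrightarrow> Good z \<Longrightarrow> Q d z / S \<beta> z \<ge> 0"
  using S_pos[of \<beta> z] by (auto simp: Good_def less_imp_le)

lemma AE_ratio_nonneg: "\<beta> \<in> prob_simplex \<Longrightarrow> AE z in P. Q d z / S \<beta> z \<ge> 0"
  using AE_Good by (rule AE_mp) (auto intro!: AE_I2 ratio_nonneg)

lemma exists_big:
  assumes a: "\<alpha> \<in> prob_simplex" and am: "\<alpha>m \<in> prob_simplex"
    and lt: "Eobj M \<pi> q \<alpha> < Eobj M \<pi> q \<alpha>m"
  shows "\<exists>d. (\<integral>\<^sup>+ z. ennreal (Q d z / S \<alpha> z) \<partial>P) > 1"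
proof (rule ccontr)
  interpret prob_space P by (rule prob)
  assume "\<not> ?thesis"
  then have g: "(\<integral>\<^sup>+ z. ennreal (Q d z / S \<alpha> z) \<partial>P) \<le> 1" for d by (simp add: not_less)
  let ?f = "\<lambda>d z. Q d z / S \<alpha> z"
  have fint: "integrable P (?f d)" for d
  proof (rule integrableI_bounded)
    have "(\<integral>\<^sup>+ z. ennreal (norm (?f d z)) \<partial>P) = (\<integral>\<^sup>+ z. ennreal (?f d z) \<partial>P)"
      by (rule nn_integral_cong_AE, rule AE_mp[OF AE_ratio_nonneg[OF a, of d]], rule AE_I2, rule impI)
         (simp only: real_norm_def abs_of_nonneg)
    also have "\<dots> \<le> 1" by (rule g)
    finally have "(\<integral>\<^sup>+ z. ennreal (norm (?f d z)) \<partial>P) \<le> 1" .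
    then show "(\<integral>\<^sup>+ z. ennreal (norm (?f d z)) \<partial>P) < \<infinity>"
      using ennreal_one_less_top unfolding infinity_ennreal_def by (rule le_less_trans)
  qed simp
  have fle: "integral\<^sup>L P (?f d) \<le> 1" for d
  proof -
    have e: "ennreal (integral\<^sup>L P (?f d)) = (\<integral>\<^sup>+ z. ennreal (?f d z) \<partial>P)"
      by (rule nn_integral_eq_integral[symmetric, OF fint])
         (rule AE_ratio_nonneg[OF a])
    have "ennreal (integral\<^sup>L P (?f d)) \<le> 1" unfolding e by (rule g)
    then show ?thesis by (simp only: ennreal_le_1)
  qed
  have amb: "\<And>d. \<alpha>m$d \<ge> 0" "(\<Sum>d\<in>UNIV. \<alpha>m$d) = 1" using am by (auto simp: prob_simplex_def)
  have rint: "integrable P (\<lambda>z. (\<Sum>d\<in>UNIV. \<alpha>m$d * ?f d z) - 1)"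
    by (intro Bochner_Integration.integrable_diff Bochner_Integration.integrable_sum
        integrable_mult_right fint integrable_const)
  have "Eobj M \<pi> q \<alpha>m - Eobj M \<pi> q \<alpha> = (\<integral>z. ln (S \<alpha>m z) - ln (S \<alpha> z) \<partial>P)"
    unfolding Eobj_eq by (rule Bochner_Integration.integral_diff[symmetric, OF lnS_int[OF am] lnS_int[OF a]])
  also have "\<dots> \<le> (\<integral>z. (\<Sum>d\<in>UNIV. \<alpha>m$d * ?f d z) - 1 \<partial>P)"
  proof (rule integral_mono_AE)
    show "integrable P (\<lambda>z. ln (S \<alpha>m z) - ln (S \<alpha> z))"
      by (rule Bochner_Integration.integrable_diff[OF lnS_int[OF am] lnS_int[OF a]])
    show "integrable P (\<lambda>z. (\<Sum>d\<in>UNIV. \<alpha>m$d * ?f d z) - 1)" by (rule rint)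
    show "AE z in P. ln (S \<alpha>m z) - ln (S \<alpha> z) \<le> (\<Sum>d\<in>UNIV. \<alpha>m$d * ?f d z) - 1"
      using AE_Good
    proof (rule AE_mp, intro AE_I2 impI)
      fix z assume gz: "Good z"
      have p1: "S \<alpha>m z > 0" "S \<alpha> z > 0" using S_pos gz a am by auto
      have "ln (S \<alpha>m z) - ln (S \<alpha> z) = ln (S \<alpha>m z / S \<alpha> z)" using p1 by (simp add: ln_div)
      also have "\<dots> \<le> S \<alpha>m z / S \<alpha> z - 1" by (rule ln_le_minus_one) (use p1 in simp)
      also have "S \<alpha>m z / S \<alpha> z = (\<Sum>d\<in>UNIV. \<alpha>m$d * ?f d z)"
        unfolding S_def[of \<alpha>m] by (simp add: sum_divide_distrib)
      finally show "ln (S \<alpha>m z) - ln (S \<alpha> z) \<le> (\<Sum>d\<in>UNIV. \<alpha>m$d * ?f d z) - 1" .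
    qed
  qed
  also have "\<dots> = (\<integral>z. (\<Sum>d\<in>UNIV. \<alpha>m$d * ?f d z) \<partial>P) - (\<integral>z. 1 \<partial>P)"
    by (rule Bochner_Integration.integral_diff)
       (intro Bochner_Integration.integrable_sum integrable_mult_right fint integrable_const, simp)
  also have "(\<integral>z. (\<Sum>d\<in>UNIV. \<alpha>m$d * ?f d z) \<partial>P) = (\<Sum>d\<in>UNIV. (\<integral>z. \<alpha>m$d * ?f d z \<partial>P))"
    by (rule Bochner_Integration.integral_sum) (intro integrable_mult_right fint)
  also have "\<dots> = (\<Sum>d\<in>UNIV. \<alpha>m$d * integral\<^sup>L P (?f d))"
    by (rule sum.cong) (simp_all only: integral_mult_right_zero)
  also have "(\<integral>z. 1 \<partial>P) = (1::real)" by (simp add: prob_space.prob_space[OF prob])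
  also have "(\<Sum>d\<in>UNIV. \<alpha>m$d * integral\<^sup>L P (?f d)) - 1 \<le> (\<Sum>d\<in>UNIV. \<alpha>m$d * 1) - 1"
    by (intro diff_right_mono sum_mono mult_left_mono fle amb)
  also have "\<dots> = 0" using amb by simp
  finally show False using lt by simp
qed

end

context psetup begin

definition "fm \<beta> d z = \<beta>$d * Q d z / S \<beta> z"

lemma fm_meas[measurable]: "fm \<beta> d \<in> borel_measurable P"
  unfolding fm_def by measurable

lemma Fmap_eq: "Fmap M \<pi> q \<beta> $ d = (\<integral>z. fm \<beta> d z \<partial>P)"
  by (simp add: Fmap_def fm_def Q_def S_def)

lemma fm_bounds:
  assumes b: "\<beta> \<in> prob_simplex" and g: "Good z"
  shows "0 \<le> fm \<beta> d z" "fm \<beta> d z \<le> 1"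
proof -
  have bn: "\<And>j. \<beta>$j \<ge> 0" using b by (auto simp: prob_simplex_def)
  have qn: "\<And>j. Q j z \<ge> 0" using g by (auto simp: Good_def less_imp_le)
  have sp: "S \<beta> z > 0" by (rule S_pos[OF b g])
  show "0 \<le> fm \<beta> d z" unfolding fm_def using bn qn sp by simp
  have "\<beta>$d * Q d z \<le> S \<beta> z" unfolding S_def
    by (rule member_le_sum[where f="\<lambda>j. \<beta>$j * Q j z"]) (auto intro: mult_nonneg_nonneg bn qn)
  then show "fm \<beta> d z \<le> 1" unfolding fm_def using sp by simp
qed

lemma fm_int: "\<beta> \<in> prob_simplex \<Longrightarrow> integrable P (fm \<beta> d)"
proof (rule Bochner_Integration.integrable_bound[where f="\<lambda>z. 1::real"])
  interpret prob_space P by (rule prob)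
  show "integrable P (\<lambda>z. 1::real)" by simp
  assume b: "\<beta> \<in> prob_simplex"
  show "AE z in P. norm (fm \<beta> d z) \<le> norm (1::real)"
  proof (rule AE_mp[OF AE_Good], intro AE_I2 impI)
    fix z assume "Good z"
    then show "norm (fm \<beta> d z) \<le> norm (1::real)" using fm_bounds[OF b, of z d] by simp
  qed
qed simp

lemma F_simplex:
  assumes b: "\<beta> \<in> prob_simplex" and pos: "\<And>j. \<beta>$j > 0"
  shows "Fmap M \<pi> q \<beta> \<in> prob_simplex" "\<And>j. Fmap M \<pi> q \<beta> $ j > 0"
proof -
  interpret prob_space P by (rule prob)
  have pj: "Fmap M \<pi> q \<beta> $ j > 0" for j
  proof -
    have nn: "AE z in P. 0 \<le> fm \<beta> j z"
      using AE_Good by (rule AE_mp) (auto intro!: AE_I2 dest: fm_bounds[OF b])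
    have ps: "AE z in P. 0 < fm \<beta> j z"
      using AE_Good
    proof (rule AE_mp, intro AE_I2 impI)
      fix z assume g: "Good z"
      have "Q j z > 0" using g by (auto simp: Good_def)
      then show "0 < fm \<beta> j z" unfolding fm_def using pos[of j] S_pos[OF b g] by simp
    qed
    have ge: "0 \<le> (\<integral>z. fm \<beta> j z \<partial>P)" by (rule integral_nonneg_AE[OF nn])
    have "(\<integral>z. fm \<beta> j z \<partial>P) \<noteq> 0"
    proof
      assume "(\<integral>z. fm \<beta> j z \<partial>P) = 0"
      then have "AE z in P. fm \<beta> j z = 0" using integral_nonneg_eq_0_iff_AE[OF fm_int[OF b] nn] by simp
      with ps have "AE z in P. False" by eventually_elim simp
      then show False by (simp add: AE_False)
    qed
    with ge show ?thesis unfolding Fmap_eq by simp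
  qed
  then show "\<And>j. Fmap M \<pi> q \<beta> $ j > 0" .
  have "(\<Sum>j\<in>UNIV. Fmap M \<pi> q \<beta> $ j) = (\<integral>z. (\<Sum>j\<in>UNIV. fm \<beta> j z) \<partial>P)"
    unfolding Fmap_eq by (rule Bochner_Integration.integral_sum[symmetric]) (rule fm_int[OF b])
  also have "\<dots> = (\<integral>z. 1 \<partial>P)"
  proof (rule integral_cong_AE)
    show "AE z in P. (\<Sum>j\<in>UNIV. fm \<beta> j z) = 1"
      using AE_Good
    proof (rule AE_mp, intro AE_I2 impI)
      fix z assume g: "Good z"
      have "(\<Sum>j\<in>UNIV. fm \<beta> j z) = (\<Sum>j\<in>UNIV. \<beta>$j * Q j z) / S \<beta> z"
        unfolding fm_def by (rule sum_divide_distrib[symmetric])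
      also have "\<dots> = S \<beta> z / S \<beta> z" by (simp only: S_def)
      finally have "(\<Sum>j\<in>UNIV. fm \<beta> j z) = S \<beta> z / S \<beta> z" .
      then show "(\<Sum>j\<in>UNIV. fm \<beta> j z) = 1" using S_pos[OF b g] by simp
    qed
  qed simp_all
  also have "\<dots> = (1::real)" by (simp add: prob_space)
  finally show "Fmap M \<pi> q \<beta> \<in> prob_simplex"
    using pj unfolding prob_simplex_def by (auto intro: less_imp_le)
qed

lemma F_growth:
  assumes b: "\<beta> \<in> prob_simplex" and c: "c \<ge> 0"
    and ge: "ennreal c \<le> (\<integral>\<^sup>+ z. ennreal (Q d z / S \<beta> z) \<partial>P)"
  shows "c * \<beta>$d \<le> Fmap M \<pi> q \<beta> $ d"
proof -
  have bn: "\<beta>$d \<ge> 0" using b by (auto simp: prob_simplex_def)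
  have nn: "AE z in P. 0 \<le> fm \<beta> d z"
    using AE_Good by (rule AE_mp) (auto intro!: AE_I2 dest: fm_bounds[OF b])
  have "ennreal (Fmap M \<pi> q \<beta> $ d) = (\<integral>\<^sup>+ z. ennreal (fm \<beta> d z) \<partial>P)"
    unfolding Fmap_eq by (rule nn_integral_eq_integral[symmetric, OF fm_int[OF b] nn])
  also have "\<dots> = (\<integral>\<^sup>+ z. ennreal (\<beta>$d) * ennreal (Q d z / S \<beta> z) \<partial>P)"
  proof (rule nn_integral_cong_AE)
    show "AE z in P. ennreal (fm \<beta> d z) = ennreal (\<beta>$d) * ennreal (Q d z / S \<beta> z)"
      using AE_ratio_nonneg[OF b, of d]
      by (rule AE_mp) (auto intro!: AE_I2 simp: fm_def ennreal_mult[symmetric] bn)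
  qed
  also have "\<dots> = ennreal (\<beta>$d) * (\<integral>\<^sup>+ z. ennreal (Q d z / S \<beta> z) \<partial>P)"
    by (rule nn_integral_cmult) measurable
  also have "\<dots> \<ge> ennreal (\<beta>$d) * ennreal c" by (rule mult_left_mono[OF ge]) simp
  finally have "ennreal (c * \<beta>$d) \<le> ennreal (Fmap M \<pi> q \<beta> $ d)"
    by (simp add: ennreal_mult[symmetric] bn c mult.commute)
  moreover have "Fmap M \<pi> q \<beta> $ d \<ge> 0"
    unfolding Fmap_eq by (rule integral_nonneg_AE[OF nn])
  ultimately show ?thesis by simp
qed

end

context psetup begin

lemma lsc:
  assumes a: "\<alpha> \<in> prob_simplex" and big: "(\<integral>\<^sup>+ z. ennreal (Q d z / S \<alpha> z) \<partial>P) > 1"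
  shows "\<exists>r>0. \<exists>c>1. \<forall>\<beta>\<in>prob_simplex. dist \<beta> \<alpha> < r \<longrightarrow>
            ennreal c \<le> (\<integral>\<^sup>+ z. ennreal (Q d z / S \<beta> z) \<partial>P)"
proof -
  define Qs where "Qs z = (\<Sum>j\<in>UNIV. Q j z)" for z
  define h where "h n z = ennreal (Q d z / (S \<alpha> z + Qs z / real (Suc n)))" for n z
  have hm[measurable]: "h n \<in> borel_measurable P" for n unfolding h_def Qs_def by measurable
  have gq: "Good z \<Longrightarrow> Q j z \<ge> 0" for z j by (auto simp: Good_def less_imp_le)
  have gqs: "Good z \<Longrightarrow> Qs z \<ge> 0" for z unfolding Qs_def by (auto intro: sum_nonneg gq)
  have mono: "Good z \<Longrightarrow> h n z \<le> h (Suc n) z" for n z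
  proof -
    assume g: "Good z"
    have sp: "S \<alpha> z > 0" by (rule S_pos[OF a g])
    have "Qs z / real (Suc (Suc n)) \<le> Qs z / real (Suc n)"
      using gqs[OF g] by (intro divide_left_mono) auto
    moreover have "0 \<le> Qs z / real (Suc (Suc n))" using gqs[OF g] by simp
    ultimately show ?thesis unfolding h_def
      using sp gq[OF g, of d]
      by (intro ennreal_leI divide_left_mono) (auto intro!: mult_pos_pos add_pos_nonneg)
  qed
  have lim: "Good z \<Longrightarrow> (SUP n. h n z) = ennreal (Q d z / S \<alpha> z)" for z
  proof -
    assume g: "Good z"
    have sp: "S \<alpha> z > 0" by (rule S_pos[OF a g])
    have "(\<lambda>n. Qs z / real (Suc n)) \<longlonglongrightarrow> 0"
      using LIMSEQ_Suc[OF lim_const_over_n[of "Qs z"]] by simp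
    then have "(\<lambda>n. Q d z / (S \<alpha> z + Qs z / real (Suc n))) \<longlonglongrightarrow> Q d z / (S \<alpha> z + 0)"
      using sp by (intro tendsto_intros) auto
    then have t: "(\<lambda>n. h n z) \<longlonglongrightarrow> ennreal (Q d z / S \<alpha> z)"
      unfolding h_def by (intro tendsto_ennrealI) simp
    have "incseq (\<lambda>n. h n z)" by (rule incseq_SucI) (rule mono[OF g])
    from LIMSEQ_unique[OF LIMSEQ_SUP[OF this] t] show ?thesis .
  qed
  have "(\<integral>\<^sup>+ z. ennreal (Q d z / S \<alpha> z) \<partial>P) = (\<integral>\<^sup>+ z. (SUP n. h n z) \<partial>P)"
    by (rule nn_integral_cong_AE) (rule AE_mp[OF AE_Good], intro AE_I2 impI, simp add: lim)
  also have "\<dots> = (SUP n. integral\<^sup>N P (h n))"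
    by (rule nn_integral_monotone_convergence_SUP_AE)
       (rule AE_mp[OF AE_Good], intro AE_I2 impI, simp add: mono, measurable)
  finally have "1 < (SUP n. integral\<^sup>N P (h n))" using big by simp
  then obtain n where n: "1 < integral\<^sup>N P (h n)" by (auto simp: less_SUP_iff)
  then obtain c' where c': "1 < c'" "c' < integral\<^sup>N P (h n)" using dense by blast
  then have "c' \<noteq> top" using top.not_eq_extremum by fastforce
  then obtain c where cc: "c' = ennreal c" "0 \<le> c" by (cases c') auto
  have c1: "c > 1" using c'(1) cc by simp
  define r where "r = 1 / real (Suc n)"
  have rpos: "r > 0" unfolding r_def by simp
  have main: "ennreal c \<le> (\<integral>\<^sup>+ z. ennreal (Q d z / S \<beta> z) \<partial>P)"
    if b: "\<beta> \<in> prob_simplex" and dst: "dist \<beta> \<alpha> < r" for \<beta>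
  proof -
    have "integral\<^sup>N P (h n) \<le> (\<integral>\<^sup>+ z. ennreal (Q d z / S \<beta> z) \<partial>P)"
    proof (rule nn_integral_mono_AE, rule AE_mp[OF AE_Good], intro AE_I2 impI)
      fix z assume g: "Good z"
      have sb: "S \<beta> z > 0" by (rule S_pos[OF b g])
      have comp: "\<beta>$j - \<alpha>$j \<le> r" for j
      proof -
        have "\<beta>$j - \<alpha>$j \<le> \<bar>(\<beta> - \<alpha>)$j\<bar>" by simp
        also have "\<dots> \<le> norm (\<beta> - \<alpha>)" by (rule component_le_norm_cart)
        also have "\<dots> < r" using dst by (simp add: dist_norm)
        finally show ?thesis by simp
      qed
      have "S \<beta> z - S \<alpha> z = (\<Sum>j\<in>UNIV. (\<beta>$j - \<alpha>$j) * Q j z)"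
        unfolding S_def by (simp add: sum_subtractf[symmetric] left_diff_distrib)
      also have "\<dots> \<le> (\<Sum>j\<in>UNIV. r * Q j z)"
        by (intro sum_mono mult_right_mono comp gq[OF g])
      also have "\<dots> = Qs z / real (Suc n)" unfolding Qs_def r_def by (simp add: sum_divide_distrib)
      finally have le: "S \<beta> z \<le> S \<alpha> z + Qs z / real (Suc n)" by simp
      show "h n z \<le> ennreal (Q d z / S \<beta> z)" unfolding h_def
        using le sb gq[OF g, of d] by (intro ennreal_leI divide_left_mono) auto
    qed
    then show ?thesis using c'(2) cc by simp
  qed
  show ?thesis using rpos c1 main by blast
qed

end

lemma alpha_seq_Suc: "alpha_seq (F :: real^'d::finite \<Rightarrow> real^'d) (Suc k) = (F ^^ k) (\<chi> d. 1 / real CARD('d))"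
  by (simp add: alpha_seq_def)

theorem proposition4p2:
  fixes M :: "'a measure" and \<pi> :: "'a \<Rightarrow> real"
    and q :: "'d::finite \<Rightarrow> 'a \<Rightarrow> 'a \<Rightarrow> real"
    and \<alpha>max :: "real^'d"
  assumes sf: "sigma_finite_measure M"
    and pi_meas: "\<pi> \<in> borel_measurable M"
    and pi_nonneg: "\<And>x. x \<in> space M \<Longrightarrow> \<pi> x \<ge> 0"
    and pi_int: "(\<integral>\<^sup>+ x. ennreal (\<pi> x) \<partial>M) = 1"
    and q_meas: "\<And>d. (\<lambda>z. q d (fst z) (snd z)) \<in> borel_measurable (M \<Otimes>\<^sub>M M)"
    and q_nonneg: "\<And>d x y. x \<in> space M \<Longrightarrow> y \<in> space M \<Longrightarrow> q d x y \<ge> 0"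
    and q_int: "\<And>d x. x \<in> space M \<Longrightarrow> (\<integral>\<^sup>+ y. ennreal (q d x y) \<partial>M) = 1"
    and A1: "\<And>d. emeasure (pibar M \<pi>) {z \<in> space (M \<Otimes>\<^sub>M M). q d (fst z) (snd z) = 0} = 0"
    and A2: "\<And>d. (\<integral>\<^sup>+ z. ennreal \<bar>ln (q d (fst z) (snd z))\<bar> \<partial>pibar M \<pi>) < \<infinity>"
    and conc: "strictly_concave_on prob_simplex (Eobj M \<pi> q)"
    and max_in: "\<alpha>max \<in> prob_simplex"
    and max_unique: "\<And>\<beta>. \<beta> \<in> prob_simplex \<Longrightarrow> \<beta> \<noteq> \<alpha>max \<Longrightarrow> Eobj M \<pi> q \<beta> < Eobj M \<pi> q \<alpha>max"
  shows "\<forall>\<alpha>\<in>prob_simplex. \<alpha> \<noteq> \<alpha>max \<longrightarrow>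
           (\<exists>V. openin (top_of_set prob_simplex) V \<and> \<alpha> \<in> V \<and>
              (\<forall>t0\<ge>1. alpha_seq (Fmap M \<pi> q) t0 \<in> V \<longrightarrow>
                 (\<exists>t>t0. alpha_seq (Fmap M \<pi> q) t \<notin> V)))"
proof (intro ballI impI)
  interpret psetup M \<pi> q
    by (rule psetup.intro[OF sf pi_meas pi_nonneg pi_int q_meas q_nonneg A1 A2])
  fix \<alpha> assume a: "\<alpha> \<in> prob_simplex" and ne: "\<alpha> \<noteq> \<alpha>max"
  let ?F = "Fmap M \<pi> q"
  let ?a = "alpha_seq ?F"
  obtain d where big: "(\<integral>\<^sup>+ z. ennreal (Q d z / S \<alpha> z) \<partial>P) > 1"
    using exists_big[OF a max_in max_unique[OF a ne]] by blast
  obtain r c where r: "r > 0" and c: "c > 1"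
    and lb: "\<And>\<beta>. \<beta> \<in> prob_simplex \<Longrightarrow> dist \<beta> \<alpha> < r \<Longrightarrow>
               ennreal c \<le> (\<integral>\<^sup>+ z. ennreal (Q d z / S \<beta> z) \<partial>P)"
    using lsc[OF a big] by blast
  define V where "V = prob_simplex \<inter> ball \<alpha> r"
  have inv: "?a (Suc k) \<in> prob_simplex \<and> (\<forall>j. ?a (Suc k) $ j > 0)" for k
  proof (induction k)
    case 0
    have "(\<Sum>d\<in>(UNIV::'d set). 1 / real CARD('d)) = 1" by simp
    then show ?case by (simp add: alpha_seq_Suc prob_simplex_def)
  next
    case (Suc k)
    have eq: "?a (Suc (Suc k)) = ?F (?a (Suc k))" by (simp add: alpha_seq_Suc)
    show ?case unfolding eq using F_simplex[of "?a (Suc k)"] Suc by blast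
  qed
  have step: "?a (Suc (Suc k)) = ?F (?a (Suc k))" for k by (simp add: alpha_seq_Suc)
  show "\<exists>V. openin (top_of_set prob_simplex) V \<and> \<alpha> \<in> V \<and>
              (\<forall>t0\<ge>1. ?a t0 \<in> V \<longrightarrow> (\<exists>t>t0. ?a t \<notin> V))"
  proof (intro exI[of _ V] conjI allI impI)
    show "openin (top_of_set prob_simplex) V" unfolding V_def by (intro openin_open_Int) simp
    show "\<alpha> \<in> V" unfolding V_def using a r by simp
    fix t0 :: nat assume t0: "t0 \<ge> 1" and inV: "?a t0 \<in> V"
    obtain k0 where k0: "t0 = Suc k0" using t0 by (cases t0) auto
    show "\<exists>t>t0. ?a t \<notin> V"
    proof (rule ccontr)
      assume "\<not> ?thesis"
      then have allV: "?a (Suc (k0 + k)) \<in> V" for k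
        using inV k0 by (cases k) auto
      have grow: "c ^ k * ?a (Suc k0) $ d \<le> ?a (Suc (k0 + k)) $ d" for k
      proof (induction k)
        case 0 then show ?case by simp
      next
        case (Suc k)
        let ?b = "?a (Suc (k0 + k))"
        have bV: "?b \<in> prob_simplex" "dist ?b \<alpha> < r" using allV[of k] by (auto simp: V_def dist_commute)
        have "c * ?b $ d \<le> ?F ?b $ d"
          by (rule F_growth[OF bV(1)]) (use c lb[OF bV] in auto)
        moreover have "c ^ Suc k * ?a (Suc k0) $ d \<le> c * ?b $ d"
          using Suc c by simp
        ultimately show ?case using step[of "k0 + k"] by simp
      qed
      have le1: "?a (Suc (k0 + k)) $ d \<le> 1" for k
      proof -
        have s: "?a (Suc (k0 + k)) \<in> prob_simplex" using inv by blast
        have "?a (Suc (k0 + k)) $ d \<le> (\<Sum>j\<in>UNIV. ?a (Suc (k0 + k)) $ j)"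
          by (rule member_le_sum) (use s in \<open>auto simp: prob_simplex_def\<close>)
        then show ?thesis using s by (simp add: prob_simplex_def)
      qed
      have p0: "?a (Suc k0) $ d > 0" using inv by blast
      obtain k where "1 / ?a (Suc k0) $ d < c ^ k" using real_arch_pow[OF c] by blast
      then have "1 < c ^ k * ?a (Suc k0) $ d" using p0 by (simp add: field_simps)
      with grow[of k] le1[of k] show False by simp
    qed
  qed
qed

end
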